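(* Let $k\ge0$ and $n\ge 2k+2$, and fix reals $t_1<\dots<t_{n+1}$. Let $C_{2k+2}(n+1)=\mathrm{conv}\{\mu_{2k+2}(t_i): i\in[n+1]\}$ and $C_{2k+1}(n+1)=\mathrm{conv}\{\mu_{2k+1}(t_i): i\in[n+1]\}$, and identify faces of both polytopes with subsets of the index set $[n+1]$ of their vertices. If $F\subseteq[n+1]$ indexes a $k$-face of $C_{2k+2}(n+1)$ but $F$ does not index a $k$-face of $C_{2k+1}(n+1)$, then every facet of $C_{2k+2}(n+1)$ containing $F$ is a lower facet.
   Context: $\mu_d(t):=(t,t^2,\dots,t^d)^T\in\mathbb R^d$ is the moment curve. A facet of a full-dimensional polytope in $\mathbb R^d$ is an upper facet if its outer normal vector has positive last coordinate, and a lower facet if its outer normal vector has negative last coordinate (for cyclic polytopes on the moment curve every facet is one of the two). *)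

theory Defs
  imports "HOL-Analysis.Analysis"
begin

text \<open>Points of R^d are modelled as vectors of type real^'n with CARD('n) = d.
  The coordinates are ordered by a bijection e :: 'n => nat onto {1..d}:
  coordinate i carries the e i-th coordinate of the usual R^d.\<close>

definition moment :: "('n::finite \<Rightarrow> nat) \<Rightarrow> real \<Rightarrow> real^'n" where
  "moment e s = (\<chi> i. s ^ e i)"

definition conv_idx :: "('n::finite \<Rightarrow> nat) \<Rightarrow> (nat \<Rightarrow> real) \<Rightarrow> nat set \<Rightarrow> (real^'n) set" where
  "conv_idx e t I = convex hull ((\<lambda>i. moment e (t i)) ` I)"

definition cyclic_polytope :: "('n::finite \<Rightarrow> nat) \<Rightarrow> (nat \<Rightarrow> real) \<Rightarrow> nat \<Rightarrow> (real^'n) set" where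
  "cyclic_polytope e t N = conv_idx e t {1..N}"

definition indexes_face :: "('n::finite \<Rightarrow> nat) \<Rightarrow> (nat \<Rightarrow> real) \<Rightarrow> nat \<Rightarrow> nat set \<Rightarrow> int \<Rightarrow> bool" where
  "indexes_face e t N F j \<longleftrightarrow>
     F \<subseteq> {1..N} \<and> conv_idx e t F face_of cyclic_polytope e t N \<and> aff_dim (conv_idx e t F) = j"

definition outer_normal :: "(real^'n) set \<Rightarrow> (real^'n) set \<Rightarrow> real^'n \<Rightarrow> bool" where
  "outer_normal P G u \<longleftrightarrow> u \<noteq> 0 \<and> (\<exists>c. (\<forall>x\<in>P. inner u x \<le> c) \<and> (\<forall>y\<in>G. inner u y = c))"

definition lower_facet :: "('n::finite \<Rightarrow> nat) \<Rightarrow> (real^'n) set \<Rightarrow> (real^'n) set \<Rightarrow> bool" where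
  "lower_facet e P G \<longleftrightarrow> (\<exists>u. outer_normal P G u \<and> (\<forall>i. e i = CARD('n) \<longrightarrow> u $ i < 0))"

end

theory Submission imports Defs "HOL-Computational_Algebra.Polynomial"
begin

lemma vec_of_poly:
  fixes e :: "'n::finite \<Rightarrow> nat" and q :: "real poly"
  assumes "bij_betw e UNIV {1..D}" "degree q \<le> D"
  shows "\<exists>u. \<forall>s. inner u (moment e s) = poly q s - coeff q 0"
proof (intro exI allI)
  fix s :: real
  have "inner (\<chi> i. coeff q (e i)) (moment e s) = (\<Sum>i\<in>UNIV. coeff q (e i) * s ^ e i)"
    by (simp add: inner_vec_def moment_def)
  also have "\<dots> = (\<Sum>j\<in>{1..D}. coeff q j * s^j)"
    using sum.reindex_bij_betw[OF assms(1), of "\<lambda>j. coeff q j * s^j"] by simp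
  also have "\<dots> = (\<Sum>j\<le>D. coeff q j * s^j) - coeff q 0"
  proof -
    have "{..D} = insert 0 {1..D}" by auto
    then show ?thesis by simp
  qed
  also have "(\<Sum>j\<le>D. coeff q j * s^j) = poly q s"
  proof -
    have "poly q s = poly (\<Sum>i\<le>D. monom (coeff q i) i) s"
      using poly_as_sum_of_monoms'[OF assms(2)] by simp
    also have "\<dots> = (\<Sum>j\<le>D. coeff q j * s^j)" by (simp add: poly_sum poly_monom)
    finally show ?thesis by simp
  qed
  finally show "inner (\<chi> i. coeff q (e i)) (moment e s) = poly q s - coeff q 0" .
qed

lemma poly_of_vec:
  fixes e :: "'n::finite \<Rightarrow> nat" and u :: "real^'n"
  assumes "bij_betw e UNIV {1..D}"
  shows "\<exists>p. degree p \<le> D \<and> (\<forall>s. poly p s = inner u (moment e s) - c) \<and> (\<forall>i. coeff p (e i) = u $ i)"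
proof -
  define p where "p = (\<Sum>i\<in>UNIV. monom (u$i) (e i)) - [:c:]"
  have eD: "e i \<in> {1..D}" for i using assms by (auto simp: bij_betw_def)
  have inj: "inj e" using assms by (auto simp: bij_betw_def)
  have dm: "degree (monom (u$i) (e i)) \<le> D" for i
    using eD[of i] degree_monom_le[of "u$i" "e i"] by simp
  have "degree (\<Sum>i\<in>UNIV. monom (u$i) (e i)) \<le> D" by (rule degree_sum_le) (auto simp: dm)
  then have "degree p \<le> D" unfolding p_def by (rule degree_diff_le) simp
  moreover have "poly p s = inner u (moment e s) - c" for s
    unfolding p_def by (simp add: poly_sum poly_monom inner_vec_def moment_def algebra_simps)
  moreover have "coeff p (e i) = u $ i" for i
  proof -
    have "coeff [:c:] (e i) = 0" using eD[of i] by (cases "e i") (auto simp: coeff_pCons)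
    moreover have "(\<Sum>j\<in>UNIV. coeff (monom (u$j) (e j)) (e i)) = u $ i"
    proof -
      have "(\<Sum>j\<in>UNIV. coeff (monom (u$j) (e j)) (e i)) = (\<Sum>j\<in>UNIV. if j = i then u$j else 0)"
        using inj by (intro sum.cong) (auto simp: inj_eq)
      then show ?thesis by simp
    qed
    ultimately show ?thesis by (simp add: coeff_sum p_def)
  qed
  ultimately show ?thesis by blast
qed

lemma moment_inj:
  fixes e :: "'n::finite \<Rightarrow> nat"
  assumes "bij_betw e UNIV {1..D}" "D \<ge> 1"
  shows "inj (moment e)"
proof
  fix a b assume h: "moment e a = moment e b"
  obtain i where "e i = 1" using assms by (metis atLeastAtMost_iff bij_betw_def imageE le_refl)
  then show "a = b" using arg_cong[OF h, of "\<lambda>v. v $ i"] by (simp add: moment_def)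
qed

lemma moment_inj_on:
  fixes e :: "'n::finite \<Rightarrow> nat"
  assumes "bij_betw e UNIV {1..D}" "D \<ge> 1" "inj_on t I"
  shows "inj_on (\<lambda>i. moment e (t i)) I"
proof (rule inj_onI)
  fix x y assume "x \<in> I" "y \<in> I" "moment e (t x) = moment e (t y)"
  then have "t x = t y" using moment_inj[OF assms(1,2)] by (meson injD)
  then show "x = y" using assms(3) \<open>x \<in> I\<close> \<open>y \<in> I\<close> by (meson inj_onD)
qed

lemma moment_aff_indep:
  fixes e :: "'n::finite \<Rightarrow> nat"
  assumes "bij_betw e UNIV {1..D}" "D \<ge> 1" "finite I" "inj_on t I" "card I \<le> D + 1"
  shows "\<not> affine_dependent ((\<lambda>i. moment e (t i)) ` I)"
proof
  let ?m = "\<lambda>i. moment e (t i)"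
  have injm: "inj_on ?m I" by (rule moment_inj_on[OF assms(1,2,4)])
  assume "affine_dependent (?m ` I)"
  then obtain x where x: "x \<in> ?m ` I" "x \<in> affine hull (?m ` I - {x})"
    unfolding affine_dependent_def by blast
  then obtain j where j0: "j \<in> I" "x = ?m j" by blast
  with x have j: "j \<in> I" "?m j \<in> affine hull (?m ` I - {?m j})" by simp_all
  have eq: "?m ` I - {?m j} = ?m ` (I - {j})"
    using inj_on_image_set_diff[OF injm, of I "{j}"] j(1) by simp
  define q where "q = (\<Prod>i\<in>I-{j}. [:-t i, 1:])"
  have "degree q \<le> (\<Sum>i\<in>I-{j}. 1)" unfolding q_def
    using degree_prod_sum_le[of "I-{j}" "\<lambda>i. [:-t i, 1:]"] assms(3) by (simp add: o_def)
  also have "\<dots> \<le> D" using assms(3,5) j(1) by simp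
  finally obtain u where u: "\<forall>s. inner u (moment e s) = poly q s - coeff q 0"
    using vec_of_poly[OF assms(1)] by blast
  have pq: "poly q s = (\<Prod>i\<in>I-{j}. s - t i)" for s by (simp add: q_def poly_prod)
  have "?m ` (I - {j}) \<subseteq> {x. inner u x = - coeff q 0}"
    using u pq assms(3) by auto
  then have "affine hull (?m ` (I - {j})) \<subseteq> {x. inner u x = - coeff q 0}"
    by (intro hull_minimal) (auto simp: affine_hyperplane)
  then have "?m j \<in> {x. inner u x = - coeff q 0}" using j(2) eq by (metis subsetD)
  then have "poly q (t j) = 0" using u by simp
  moreover have "(\<Prod>i\<in>I-{j}. t j - t i) \<noteq> 0"
    using assms(3,4) j(1) by (auto simp: inj_on_def)
  ultimately show False using pq by simp
qed

lemma moment_aff_dim: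
  fixes e :: "'n::finite \<Rightarrow> nat"
  assumes "bij_betw e UNIV {1..D}" "D \<ge> 1" "finite I" "inj_on t I" "card I \<le> D + 1"
  shows "aff_dim (conv_idx e t I) = int (card I) - 1"
proof -
  have injm: "inj_on (\<lambda>i. moment e (t i)) I" by (rule moment_inj_on[OF assms(1,2,4)])
  show ?thesis
    using aff_dim_affine_independent[OF moment_aff_indep[OF assms]] card_image[OF injm]
    by (simp add: conv_idx_def aff_dim_convex_hull)
qed

lemma face_by_hyperplane:
  fixes e :: "'n::finite \<Rightarrow> nat"
  assumes "F \<subseteq> {1..N}" "\<forall>i\<in>{1..N}. inner u (moment e (t i)) \<le> c"
    "\<forall>i\<in>{1..N}. inner u (moment e (t i)) = c \<longleftrightarrow> i \<in> F"
  shows "conv_idx e t F face_of cyclic_polytope e t N"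
proof -
  let ?m = "\<lambda>i. moment e (t i)"
  let ?S = "?m ` {1..N}"
  let ?H = "{x. inner u x = c}"
  have sub: "convex hull ?S \<subseteq> {x. inner u x \<le> c}"
    using assms(2) by (intro hull_minimal) (auto simp: convex_halfspace_le)
  have face: "(convex hull ?S \<inter> ?H) face_of convex hull ?S"
    using sub by (intro face_of_Int_supporting_hyperplane_le) auto
  have eq: "convex hull ?S \<inter> ?H = convex hull (?m ` F)"
  proof
    obtain S' where S': "S' \<subseteq> ?S" "convex hull ?S \<inter> ?H = convex hull S'"
      using face_of_convex_hull_subset[OF finite_imp_compact[OF finite_imageI[OF finite_atLeastAtMost]] face] by blast
    have "S' \<subseteq> ?H" using S'(2) hull_subset[of S' convex] by blast
    have "S' \<subseteq> ?m ` F"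
    proof
      fix y assume y: "y \<in> S'"
      then obtain i where i: "i \<in> {1..N}" "y = ?m i" using S'(1) by blast
      have "inner u y = c" using y \<open>S' \<subseteq> ?H\<close> by blast
      then have "i \<in> F" using i assms(3) by blast
      then show "y \<in> ?m ` F" using i by blast
    qed
    then show "convex hull ?S \<inter> ?H \<subseteq> convex hull (?m ` F)" using S'(2) by (simp add: hull_mono)
  next
    have "convex hull (?m ` F) \<subseteq> convex hull ?S" using assms(1) by (intro hull_mono) auto
    moreover have "convex hull (?m ` F) \<subseteq> ?H"
      using assms(1,3) by (intro hull_minimal) (auto simp: convex_hyperplane)
    ultimately show "convex hull (?m ` F) \<subseteq> convex hull ?S \<inter> ?H" by auto
  qed
  show ?thesis using face eq by (simp add: conv_idx_def cyclic_polytope_def)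
qed

lemma poly_factor:
  fixes p :: "real poly"
  assumes "degree p \<le> D" "finite R" "card R = D" "\<forall>r\<in>R. poly p r = 0"
  shows "poly p s = coeff p D * (\<Prod>r\<in>R. s - r)"
proof -
  define r0 where "r0 = (\<Prod>r\<in>R. [:-r, 1:])"
  have dr0: "degree r0 = D" unfolding r0_def
    by (subst degree_prod_eq_sum_degree) (use assms(3) in auto)
  have lr0: "coeff r0 D = 1"
    using lead_coeff_prod[of "\<lambda>r. [:-r, 1:]" R] dr0 by (simp add: r0_def)
  define h where "h = p - smult (coeff p D) r0"
  have ch: "coeff h D = 0" using lr0 by (simp add: h_def)
  have "degree (smult (coeff p D) r0) \<le> D" using degree_smult_le[of "coeff p D" r0] dr0 by simp
  then have dh: "degree h \<le> D" unfolding h_def using assms(1) by (intro degree_diff_le)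
  have pr0: "poly r0 s = (\<Prod>r\<in>R. s - r)" for s by (simp add: r0_def poly_prod)
  have "h = 0"
  proof (rule ccontr)
    assume h0: "h \<noteq> 0"
    then have "degree h \<noteq> D" using ch by auto
    with dh have lt: "degree h < D" by simp
    have "R \<subseteq> {x. poly h x = 0}" using assms(2,4) pr0 by (auto simp: h_def)
    then have "card R \<le> card {x. poly h x = 0}" using poly_roots_finite[OF h0] by (rule card_mono[rotated])
    also have "\<dots> \<le> degree h" by (rule card_poly_roots_bound[OF h0])
    finally show False using lt assms(3) by simp
  qed
  then have "poly p s = poly (smult (coeff p D) r0) s" unfolding h_def by simp
  then show ?thesis using pr0 by simp
qed

lemma sq_poly:
  fixes L :: "real poly" and t :: "nat \<Rightarrow> real"
  assumes "inj_on t V" "F0 \<subseteq> V" "finite F0" "\<forall>i\<in>V. poly L (t i) \<ge> 0"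
    "\<forall>i\<in>V. poly L (t i) = 0 \<longleftrightarrow> i \<in> F1"
  shows "\<exists>q. degree q \<le> degree L + 2*card F0 \<and> (\<forall>i\<in>V. poly q (t i) \<le> 0)
            \<and> (\<forall>i\<in>V. poly q (t i) = 0 \<longleftrightarrow> i \<in> F1 \<union> F0)"
proof (intro exI conjI ballI)
  define Q where "Q = (\<Prod>f\<in>F0. [:-t f, 1:]^2)"
  have "degree Q \<le> (\<Sum>f\<in>F0. degree ([:-t f, 1:]^2))"
    unfolding Q_def using degree_prod_sum_le[OF assms(3), of "\<lambda>f. [:-t f, 1:]^2"] by (simp add: o_def)
  also have "\<dots> \<le> (\<Sum>f\<in>F0. 2)"
  proof (rule sum_mono)
    fix f show "degree ([:-t f, 1:]^2) \<le> 2" using degree_power_le[of "[:-t f, 1:]" 2] by simp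
  qed
  finally have dQ: "degree Q \<le> 2 * card F0" by simp
  show "degree (- (L * Q)) \<le> degree L + 2*card F0"
    using degree_mult_le[of L Q] dQ by simp
  have pQ: "poly Q s = (\<Prod>f\<in>F0. (s - t f)^2)" for s by (simp add: Q_def poly_prod)
  fix i assume i: "i \<in> V"
  have Qnn: "poly Q (t i) \<ge> 0" unfolding pQ by (intro prod_nonneg) auto
  then show "poly (- (L * Q)) (t i) \<le> 0" using assms(4) i by simp
  have "poly Q (t i) = 0 \<longleftrightarrow> i \<in> F0"
  proof
    assume "poly Q (t i) = 0"
    then obtain f where "f \<in> F0" "t i = t f" unfolding pQ using assms(3) by auto
    then show "i \<in> F0" using assms(1,2) i by (metis inj_onD subsetD)
  next
    assume "i \<in> F0" then show "poly Q (t i) = 0" unfolding pQ using assms(3) by (auto intro: prod_zero)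
  qed
  then show "poly (- (L * Q)) (t i) = 0 \<longleftrightarrow> i \<in> F1 \<union> F0" using assms(5) i by auto
qed

theorem lemma2p4:
  fixes k n :: nat and t :: "nat \<Rightarrow> real" and F :: "nat set"
    and e :: "'n::finite \<Rightarrow> nat" and e' :: "'m::finite \<Rightarrow> nat"
  assumes "bij_betw e UNIV {1..2*k+2}"
    and "bij_betw e' UNIV {1..2*k+1}"
    and "n \<ge> 2*k+2"
    and "strict_mono_on {1..n+1} t"
    and "indexes_face e t (n+1) F (int k)"
    and "\<not> indexes_face e' t (n+1) F (int k)"
  shows "\<forall>G. indexes_face e t (n+1) G (int (2*k+1)) \<and> F \<subseteq> G
           \<longrightarrow> lower_facet e (cyclic_polytope e t (n+1)) (conv_idx e t G)"
proof (intro allI impI)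
  fix G assume "indexes_face e t (n+1) G (int (2*k+1)) \<and> F \<subseteq> G"
  then have Gf: "indexes_face e t (n+1) G (int (2*k+1))" and FG: "F \<subseteq> G" by auto
  let ?V = "{1..n+1}"
  let ?m = "\<lambda>i. moment e (t i)"
  let ?m' = "\<lambda>i. moment e' (t i)"
  let ?P = "cyclic_polytope e t (n+1)"
  have bij: "bij_betw e UNIV {1..2*k+2}" and bij': "bij_betw e' UNIV {1..2*k+1}" using assms(1,2) .
  have injt: "inj_on t ?V" using assms(4) strict_mono_on_imp_inj_on by blast
  have tlt: "t i < t j" if "i \<in> ?V" "j \<in> ?V" "i < j" for i j
    using assms(4) that by (simp add: strict_mono_on_def)
  have GV: "G \<subseteq> ?V" and Gface: "conv_idx e t G face_of ?P"
    and Gdim: "aff_dim (conv_idx e t G) = int (2*k+1)" using Gf unfolding indexes_face_def by auto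
  have finG: "finite G" using GV finite_subset by blast
  have FV: "F \<subseteq> ?V" using FG GV by blast
  have finF: "finite F" using FV finite_subset by blast
  have polyh: "polyhedron ?P" unfolding cyclic_polytope_def conv_idx_def
    by (intro polytope_imp_polyhedron polytope_convex_hull) simp
  have "conv_idx e t G exposed_face_of ?P" using Gface exposed_face_of_polyhedron[OF polyh] by simp
  then obtain a b where ab: "?P \<subseteq> {x. a \<bullet> x \<le> b}" "conv_idx e t G = ?P \<inter> {x. a \<bullet> x = b}"
    unfolding exposed_face_of_def by blast
  have fulldim: "aff_dim ?P \<ge> int (2*k+2)"
  proof -
    have sub: "{1..2*k+3} \<subseteq> ?V" using assms(3) by auto
    have "aff_dim (conv_idx e t {1..2*k+3}) = int (card {1..2*k+3}) - 1"
      by (rule moment_aff_dim[OF bij]) (use inj_on_subset[OF injt sub] in auto)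
    moreover have "conv_idx e t {1..2*k+3} \<subseteq> ?P" unfolding cyclic_polytope_def conv_idx_def
      using sub by (intro hull_mono image_mono)
    then have "aff_dim (conv_idx e t {1..2*k+3}) \<le> aff_dim ?P" by (rule aff_dim_subset)
    ultimately show ?thesis by simp
  qed
  have Gne: "conv_idx e t G \<noteq> {}" using Gdim by auto
  have a0: "a \<noteq> 0"
  proof
    assume "a = 0"
    show False
    proof (cases "b = 0")
      case True
      then have "conv_idx e t G = ?P" using ab(2) \<open>a = 0\<close> by auto
      then show False using Gdim fulldim by simp
    next
      case False
      then have "conv_idx e t G = {}" using ab(2) \<open>a = 0\<close> by auto
      then show False using Gne by simp
    qed
  qed
  have cardG1: "card G \<ge> 2*k+2"
  proof -
    have "aff_dim (?m ` G) \<le> int (card (?m ` G)) - 1" using aff_dim_le_card finG by blast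
    moreover have "card (?m ` G) \<le> card G" using card_image_le[OF finG] by blast
    moreover have "aff_dim (?m ` G) = int (2*k+1)" using Gdim by (simp add: conv_idx_def aff_dim_convex_hull)
    ultimately show ?thesis by linarith
  qed
  obtain p where p: "degree p \<le> 2*k+2" "\<forall>s. poly p s = inner a (moment e s) - b"
    "\<forall>i. coeff p (e i) = a $ i" using poly_of_vec[OF bij] by blast
  have p0: "p \<noteq> 0"
  proof
    assume "p = 0"
    then have "a $ i = 0" for i using p(3) by (metis coeff_0)
    then show False using a0 by (simp add: vec_eq_iff)
  qed
  have root: "poly p (t g) = 0" if "g \<in> G" for g
  proof -
    have "?m g \<in> conv_idx e t G" unfolding conv_idx_def using that by (intro hull_inc) simp
    then show ?thesis using ab(2) p(2) by auto
  qed
  have nonpos: "poly p (t i) \<le> 0" if "i \<in> ?V" for i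
  proof -
    have "?m i \<in> ?P" unfolding cyclic_polytope_def conv_idx_def using that by (intro hull_inc) simp
    then show ?thesis using ab(1) p(2) by auto
  qed
  have injG: "inj_on t G" using inj_on_subset[OF injt GV] .
  have cardtG: "card (t ` G) = card G" using card_image[OF injG] .
  have "card (t ` G) \<le> card {x. poly p x = 0}"
    using root by (intro card_mono[OF poly_roots_finite[OF p0]]) auto
  also have "\<dots> \<le> degree p" using card_poly_roots_bound[OF p0] .
  finally have cardG: "card G = 2*k+2" using cardtG p(1) cardG1 by linarith
  define lc where "lc = coeff p (2*k+2)"
  have fact: "poly p s = lc * (\<Prod>g\<in>G. s - t g)" for s
  proof -
    have "poly p s = lc * (\<Prod>r\<in>t ` G. s - r)" unfolding lc_def
      by (rule poly_factor[OF p(1)]) (use finG cardtG cardG root in auto)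
    also have "(\<Prod>r\<in>t ` G. s - r) = (\<Prod>g\<in>G. s - t g)" using prod.reindex[OF injG, of "\<lambda>r. s - r"] by simp
    finally show ?thesis .
  qed
  have "2*k+2 \<in> e ` UNIV" using bij by (simp add: bij_betw_def)
  then obtain iD where iD0: "2*k+2 = e iD" by (rule rangeE)
  then have iD: "e iD = 2*k+2" by simp
  have inje: "inj e" using bij by (simp add: bij_betw_def)
  have lc: "lc = a $ iD" using p(3) iD lc_def by metis
  have cardn: "CARD('n) = 2*k+2" using bij_betw_same_card[OF bij] by simp
  have lc0: "lc \<noteq> 0"
  proof
    assume "lc = 0"
    then have "\<forall>s. poly p s = 0" using fact by simp
    then show False using p0 poly_all_0_iff_0 by blast
  qed
  have cardFG: "card F \<le> card G" using card_mono[OF finG FG] .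
  have injF: "inj_on t F" using inj_on_subset[OF injt FV] .
  have cardF: "card F = k+1"
  proof -
    have "aff_dim (conv_idx e t F) = int (card F) - 1"
      by (rule moment_aff_dim[OF bij _ finF injF]) (use cardFG cardG in auto)
    moreover have "aff_dim (conv_idx e t F) = int k" using assms(5) by (simp add: indexes_face_def)
    ultimately show ?thesis by linarith
  qed
  have "lc < 0"
  proof (rule ccontr)
    assume "\<not> lc < 0"
    with lc0 have lcpos: "lc > 0" by simp
    have "indexes_face e' t (n+1) F (int k)"
    proof -
      have adim: "aff_dim (conv_idx e' t F) = int k"
        using moment_aff_dim[OF bij' _ finF injF] cardF by simp
      have "conv_idx e' t F face_of cyclic_polytope e' t (n+1)"
      proof (cases "1 \<in> F \<or> n+1 \<in> F")
        case True
        have t1le: "t 1 \<le> t i" if "i \<in> ?V" for i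
          using strict_mono_on_leD[OF assms(4)] that by auto
        have tNge: "t i \<le> t (n+1)" if "i \<in> ?V" for i
          using strict_mono_on_leD[OF assms(4)] that by auto
        have eq1: "t i = t 1 \<longleftrightarrow> i = 1" if "i \<in> ?V" for i
          using injt that by (auto dest: inj_onD)
        have eqN: "t i = t (n+1) \<longleftrightarrow> i = n+1" if "i \<in> ?V" for i
          using injt that by (auto dest: inj_onD)
        obtain L F1 where L: "degree L + 2 * card (F - {1, n+1}) \<le> 2*k+1"
          "\<forall>i\<in>?V. poly L (t i) \<ge> 0" "\<forall>i\<in>?V. poly L (t i) = 0 \<longleftrightarrow> i \<in> F1"
          "F1 \<union> (F - {1,n+1}) = F"
        proof (cases "1 \<in> F \<and> n+1 \<in> F")
          case both: True
          have c2: "card {1::nat, n+1} = 2" using assms(3) by simp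
          let ?L = "[:-t 1, 1:] * [:t (n+1), -1:]"
          have pL: "poly ?L x = (x - t 1) * (t (n+1) - x)" for x by (simp add: algebra_simps)
          have "degree ?L \<le> 2" using degree_mult_le[of "[:-t 1, 1:]" "[:t (n+1), -1:]"] by simp
          moreover have "card (F - {1, n+1}) = k - 1"
            using card_Diff_subset[of "{1, n+1}" F] both cardF finF c2 by simp
          moreover have "k \<ge> 1"
          proof -
            have "card {1, n+1} \<le> card F" using both finF by (intro card_mono) auto
            then show ?thesis using cardF c2 by simp
          qed
          ultimately have "degree ?L + 2 * card (F - {1, n+1}) \<le> 2*k+1" by linarith
          moreover have "\<forall>i\<in>?V. poly ?L (t i) \<ge> 0"
          proof
            fix i assume i: "i \<in> ?V"
            show "poly ?L (t i) \<ge> 0" unfolding pL using t1le[OF i] tNge[OF i] by simp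
          qed
          moreover have "\<forall>i\<in>?V. poly ?L (t i) = 0 \<longleftrightarrow> i \<in> {1, n+1}"
          proof
            fix i assume i: "i \<in> ?V"
            show "poly ?L (t i) = 0 \<longleftrightarrow> i \<in> {1, n+1}" unfolding pL using eq1[OF i] eqN[OF i] by auto
          qed
          moreover have "{1, n+1} \<union> (F - {1,n+1}) = F" using both by auto
          ultimately show ?thesis by (rule that)
        next
          case False
          show ?thesis
          proof (cases "1 \<in> F")
            case c1: True
            with False have nN: "n+1 \<notin> F" by simp
            let ?L = "[:-t 1, 1:]"
            have "F - {1, n+1} = F - {1}" using nN by auto
            then have "card (F - {1, n+1}) = k"
              using c1 cardF finF by (simp add: card_Diff_singleton)
            then have "degree ?L + 2 * card (F - {1, n+1}) \<le> 2*k+1" by simp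
            moreover have "\<forall>i\<in>?V. poly ?L (t i) \<ge> 0" using t1le by auto
            moreover have "\<forall>i\<in>?V. poly ?L (t i) = 0 \<longleftrightarrow> i \<in> {1}" using eq1 by auto
            moreover have "{1} \<union> (F - {1,n+1}) = F" using c1 nN by auto
            ultimately show ?thesis by (rule that)
          next
            case c1: False
            with True have cN: "n+1 \<in> F" by simp
            let ?L = "[:t (n+1), -1:]"
            have "F - {1, n+1} = F - {n+1}" using c1 by auto
            then have "card (F - {1, n+1}) = k"
              using cN cardF finF by (simp add: card_Diff_singleton)
            then have "degree ?L + 2 * card (F - {1, n+1}) \<le> 2*k+1" by simp
            moreover have "\<forall>i\<in>?V. poly ?L (t i) \<ge> 0" using tNge by auto
            moreover have "\<forall>i\<in>?V. poly ?L (t i) = 0 \<longleftrightarrow> i \<in> {n+1}"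
            proof
              fix i assume i: "i \<in> ?V"
              have "poly ?L (t i) = 0 \<longleftrightarrow> t i = t (n+1)" by auto
              then show "poly ?L (t i) = 0 \<longleftrightarrow> i \<in> {n+1}" using eqN[OF i] by simp
            qed
            moreover have "{n+1} \<union> (F - {1,n+1}) = F" using c1 cN by auto
            ultimately show ?thesis by (rule that)
          qed
        qed
        obtain q where q: "degree q \<le> degree L + 2*card (F - {1,n+1})" "\<forall>i\<in>?V. poly q (t i) \<le> 0"
          "\<forall>i\<in>?V. poly q (t i) = 0 \<longleftrightarrow> i \<in> F1 \<union> (F - {1,n+1})"
          using sq_poly[OF injt _ _ L(2,3), of "F - {1,n+1}"] FV finF by blast
        have dq: "degree q \<le> 2*k+1" using q(1) L(1) by linarith
        obtain u where u: "\<forall>s. inner u (moment e' s) = poly q s - coeff q 0"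
          using vec_of_poly[OF bij' dq] by blast
        show ?thesis
        proof (rule face_by_hyperplane[OF FV, where u=u and c="- coeff q 0"])
          show "\<forall>i\<in>?V. inner u (moment e' (t i)) \<le> - coeff q 0" using u q(2) by simp
          show "\<forall>i\<in>?V. inner u (moment e' (t i)) = - coeff q 0 \<longleftrightarrow> i \<in> F"
            using u q(3)[unfolded L(4)] by simp
        qed
      next
        case False
        have G1: "1 \<in> G"
        proof (rule ccontr)
          assume n1: "1 \<notin> G"
          have lt: "t 1 < t g" if "g \<in> G" for g
          proof -
            have gV: "g \<in> ?V" using that GV by blast
            have "g \<noteq> 1" using that n1 by blast
            with gV have "1 < g" by simp
            then show ?thesis using tlt[of 1 g] gV by simp
          qed
          have "(\<Prod>g\<in>G. t 1 - t g) = (\<Prod>g\<in>G. (-1) * (t g - t 1))" by simp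
          also have "\<dots> = (-1)^card G * (\<Prod>g\<in>G. t g - t 1)" by (simp only: prod.distrib prod_constant)
          also have "\<dots> = (\<Prod>g\<in>G. t g - t 1)" using cardG by simp
          finally have "(\<Prod>g\<in>G. t 1 - t g) > 0" using lt by (simp add: prod_pos)
          then have "poly p (t 1) > 0" using fact lcpos by simp
          then show False using nonpos[of 1] by simp
        qed
        have GN: "n+1 \<in> G"
        proof (rule ccontr)
          assume nN: "n+1 \<notin> G"
          have lt: "t g < t (n+1)" if "g \<in> G" for g
          proof -
            have gV: "g \<in> ?V" using that GV by blast
            have "g \<noteq> n+1" using that nN by blast
            with gV have "g < n+1" by simp
            then show ?thesis using tlt[of g "n+1"] gV by simp
          qed
          have "(\<Prod>g\<in>G. t (n+1) - t g) > 0" using lt by (simp add: prod_pos)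
          then have "poly p (t (n+1)) > 0" using fact lcpos by simp
          then show False using nonpos[of "n+1"] by simp
        qed
        define G' where "G' = G - {n+1}"
        have finG': "finite G'" using finG by (simp add: G'_def)
        have cardG': "card G' = 2*k+1" using cardG GN finG by (simp add: G'_def)
        have G'V: "G' \<subseteq> ?V" using GV by (auto simp: G'_def)
        define r where "r = smult (- lc) (\<Prod>g\<in>G'. [:-t g, 1:])"
        have "degree r \<le> (\<Sum>g\<in>G'. degree [:-t g, 1:])"
          unfolding r_def using degree_prod_sum_le[OF finG', of "\<lambda>g. [:-t g, 1:]"]
          by (simp add: o_def)
        then have dr: "degree r \<le> 2*k+1" using cardG' by simp
        have pr: "poly r s = - lc * (\<Prod>g\<in>G'. s - t g)" for s by (simp add: r_def poly_prod)
        have pfac: "poly p s = lc * ((s - t (n+1)) * (\<Prod>g\<in>G'. s - t g))" for s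
          using fact[of s] prod.remove[OF finG GN, of "\<lambda>g. s - t g"] by (simp add: G'_def)
        have rprop: "poly r (t i) \<le> 0 \<and> (poly r (t i) = 0 \<longleftrightarrow> i \<in> G')" if i: "i \<in> ?V" for i
        proof (cases "i \<in> G'")
          case True
          then have "(\<Prod>g\<in>G'. t i - t g) = 0" using finG' by (auto intro: prod_zero)
          then show ?thesis using pr True by simp
        next
          case False
          have Pi0: "(\<Prod>g\<in>G'. t i - t g) \<noteq> 0"
          proof
            assume "(\<Prod>g\<in>G'. t i - t g) = 0"
            then obtain g where "g \<in> G'" "t i = t g" using finG' by auto
            then have "i = g" using injt i G'V by (metis inj_onD subsetD)
            then show False using False \<open>g \<in> G'\<close> by simp
          qed
          have "(\<Prod>g\<in>G'. t i - t g) > 0"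
          proof (cases "i = n+1")
            case True
            have "t g < t (n+1)" if "g \<in> G'" for g
            proof -
              have gV: "g \<in> ?V" using that G'V by blast
              have "g \<noteq> n+1" using that by (simp add: G'_def)
              with gV have "g < n+1" by simp
              then show ?thesis using tlt[of g "n+1"] gV by simp
            qed
            then show ?thesis using True by (simp add: prod_pos)
          next
            case iN: False
            have "i < n+1" using i iN by simp
            then have neg: "t i - t (n+1) < 0" using tlt[of i "n+1"] i by simp
            have le: "lc * ((t i - t (n+1)) * (\<Prod>g\<in>G'. t i - t g)) \<le> 0"
              using nonpos[OF i] pfac by simp
            show ?thesis
            proof (rule ccontr)
              assume "\<not> ?thesis"
              then have "(\<Prod>g\<in>G'. t i - t g) < 0" using Pi0 by simp
              then have "(t i - t (n+1)) * (\<Prod>g\<in>G'. t i - t g) > 0" using neg mult_neg_neg by blast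
              then have "lc * ((t i - t (n+1)) * (\<Prod>g\<in>G'. t i - t g)) > 0" by (rule mult_pos_pos[OF lcpos])
              then show False using le by simp
            qed
          qed
          then have "poly r (t i) < 0" using pr lcpos by (simp add: mult_pos_pos)
          then show ?thesis using False by simp
        qed
        obtain u where u: "\<forall>s. inner u (moment e' s) = poly r s - coeff r 0"
          using vec_of_poly[OF bij' dr] by blast
        have faceG': "conv_idx e' t G' face_of cyclic_polytope e' t (n+1)"
        proof (rule face_by_hyperplane[OF G'V, where u=u and c="- coeff r 0"])
          show "\<forall>i\<in>?V. inner u (moment e' (t i)) \<le> - coeff r 0" using u rprop by simp
          show "\<forall>i\<in>?V. inner u (moment e' (t i)) = - coeff r 0 \<longleftrightarrow> i \<in> G'"
            using u rprop by simp
        qed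
        have indep: "\<not> affine_dependent (?m' ` G')"
          by (rule moment_aff_indep[OF bij' _ finG' inj_on_subset[OF injt G'V]]) (use cardG' in auto)
        have FG': "F \<subseteq> G'" using FG False by (auto simp: G'_def)
        have sub: "?m' ` F \<subseteq> ?m' ` G'" using FG' by (rule image_mono)
        have "conv_idx e' t F face_of conv_idx e' t G'" unfolding conv_idx_def
          using face_of_convex_hull_affine_independent[OF indep, of "convex hull (?m' ` F)"] sub by blast
        then show ?thesis using faceG' by (rule face_of_trans)
      qed
      then show ?thesis using FV adim by (simp add: indexes_face_def)
    qed
    with assms(6) show False by simp
  qed
  show "lower_facet e ?P (conv_idx e t G)"
    unfolding lower_facet_def outer_normal_def
  proof (intro exI conjI allI impI ballI)
    show "a \<noteq> 0" by (rule a0)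
    show "a \<bullet> x \<le> b" if "x \<in> ?P" for x using ab(1) that by auto
    show "a \<bullet> y = b" if "y \<in> conv_idx e t G" for y using ab(2) that by auto
    fix i assume "e i = CARD('n)"
    then have "i = iD" using iD cardn inje by (metis injD)
    then show "a $ i < 0" using lc \<open>lc < 0\<close> by simp
  qed
qed

end
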